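(* Let $1\le p\le2$, $\frac1r=\frac1p-\frac12$ (with $r=\infty$ if $p=2$, the $\ell_r$-sums then read as maxima), and $d,N\in\mathbb{N}$ with $d\le N$. (i) For every real $\xi=(\xi_S)_{S\subset[N]}$, \[ \frac1{\sqrt{1+N\log2}}\Big(\sum_{S\subset[N]}|\xi_S|^r\Big)^{1/r}\le2\sqrt2\,e^2\,\|M_\xi\colon\mathcal{B}_N\to\ell_p(\{S:S\subset[N]\})\|. \] (ii) For every real $\xi=(\xi_S)_{S\subset[N],|S|\le d}$, \[ \frac1{\sqrt{1+N\log(1+20d)}}\Big(\sum_{S\subset[N],|S|\le d}|\xi_S|^r\Big)^{1/r}\le2\sqrt2\,e^2(1+\sqrt2)^d\,\|M_\xi\colon\mathcal{B}_N^{\le d}\to\ell_p(\{S\subset[N]:|S|\le d\})\|, \] and for every real $\xi=(\xi_S)_{S\subset[N],|S|=d}$, \[ \frac1{\sqrt{1+N\log(1+20d)}}\Big(\sum_{S\subset[N],|S|=d}|\xi_S|^r\Big)^{1/r}\le2\sqrt2\,e^2\,2^{d-1}\,\|M_\xi\colon\mathcal{B}_N^{=d}\to\ell_p(\{S\subset[N]:|S|=d\})\|. \]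
   Context: $[N]=\{1,\dots,N\}$. $\mathcal{B}_N$ is the space of all functions $f\colon\{-1,1\}^N\to\mathbb{R}$ with the sup norm; each has the Fourier–Walsh expansion $f(x)=\sum_{S\subset[N]}\widehat f(S)x^S$ with $x^S=\prod_{n\in S}x_n$ and $\widehat f(S)=2^{-N}\sum_{x}f(x)x^S$. $\mathcal{B}_N^{\le d}$ consists of those $f$ with $\widehat f(S)=0$ for $|S|>d$, and $\mathcal{B}_N^{=d}$ of those with $\widehat f(S)=0$ for $|S|\neq d$. $M_\xi f=(\xi_S\widehat f(S))_S$ over the relevant index set. $\log$ is natural. *)

theory Defs
  imports "HOL-Analysis.Analysis" "HOL-Library.FuncSet"
begin

definition cube :: "nat \<Rightarrow> (nat \<Rightarrow> real) set" where
  "cube N = PiE {1..N} (\<lambda>_. {-1, 1})"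

definition walsh :: "nat set \<Rightarrow> (nat \<Rightarrow> real) \<Rightarrow> real" where
  "walsh S x = (\<Prod>n\<in>S. x n)"

definition fourier :: "nat \<Rightarrow> ((nat \<Rightarrow> real) \<Rightarrow> real) \<Rightarrow> nat set \<Rightarrow> real" where
  "fourier N f S = (\<Sum>x\<in>cube N. f x * walsh S x) / 2 ^ N"

definition supnorm :: "nat \<Rightarrow> ((nat \<Rightarrow> real) \<Rightarrow> real) \<Rightarrow> real" where
  "supnorm N f = Max ((\<lambda>x. \<bar>f x\<bar>) ` cube N)"

definition deg_le :: "nat \<Rightarrow> nat \<Rightarrow> ((nat \<Rightarrow> real) \<Rightarrow> real) \<Rightarrow> bool" where
  "deg_le N d f \<longleftrightarrow> (\<forall>S. S \<subseteq> {1..N} \<and> card S > d \<longrightarrow> fourier N f S = 0)"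

definition homog :: "nat \<Rightarrow> nat \<Rightarrow> ((nat \<Rightarrow> real) \<Rightarrow> real) \<Rightarrow> bool" where
  "homog N d f \<longleftrightarrow> (\<forall>S. S \<subseteq> {1..N} \<and> card S \<noteq> d \<longrightarrow> fourier N f S = 0)"

definition lp_norm :: "real \<Rightarrow> nat set set \<Rightarrow> (nat set \<Rightarrow> real) \<Rightarrow> real" where
  "lp_norm p I a = (\<Sum>S\<in>I. \<bar>a S\<bar> powr p) powr (1 / p)"

definition lr_norm :: "real \<Rightarrow> nat set set \<Rightarrow> (nat set \<Rightarrow> real) \<Rightarrow> real" where
  "lr_norm p I a = (if p = 2 then Max ((\<lambda>S. \<bar>a S\<bar>) ` I)
                    else lp_norm (1 / (1 / p - 1 / 2)) I a)"

text \<open>Operator norm of the multiplier M_xi f = (xi_S fhat(S))_{S in I} from the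
  subspace {f. F f} of B_N (sup norm) into ell_p(I).\<close>
definition mult_norm ::
  "nat \<Rightarrow> (((nat \<Rightarrow> real) \<Rightarrow> real) \<Rightarrow> bool) \<Rightarrow> nat set set \<Rightarrow> real \<Rightarrow> (nat set \<Rightarrow> real) \<Rightarrow> real" where
  "mult_norm N F I p \<xi> =
     Sup {lp_norm p I (\<lambda>S. \<xi> S * fourier N f S) | f. F f \<and> supnorm N f \<le> 1}"

end

theory Submission
  imports Defs "HOL-Probability.Hoeffding"
begin


lemma cosh_bound:
  fixes t :: real
  shows "exp t + exp (-t) \<le> 2 * exp (t^2/2)"
proof -
  have key: "exp u + exp (-u) \<le> 2 * exp (u^2/2)" if "u \<ge> 0" for u :: real
  proof -
    have L: "-(2*u) * (1/2) + ln (1 + (1/2) * (exp (2*u) - 1)) \<le> (2*u)^2/8"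
      by (rule Hoeffdings_lemma_aux) (use that in simp_all)
    have pos: "1 + (1/2) * (exp (2*u) - 1) > 0"
    proof -
      have "1 + (1/2) * (exp (2*u) - 1) = (1 + exp (2*u)) / 2" by (simp add: field_simps)
      moreover have "(1 + exp (2*u)) / 2 > (0::real)" by (simp add: add_pos_pos)
      ultimately show ?thesis by (simp only:)
    qed
    have e2: "exp (2*u) = exp u * exp u" by (metis exp_add mult_2)
    have "(exp u + exp (-u))/2 = exp (-u) * (1 + (1/2) * (exp (2*u) - 1))"
      using e2 exp_minus_inverse[of u] by (simp add: field_simps)
    also have "\<dots> = exp (-u) * exp (ln (1 + (1/2) * (exp (2*u) - 1)))"
      using pos by (simp only: exp_ln)
    also have "\<dots> = exp (-u + ln (1 + (1/2) * (exp (2*u) - 1)))"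
      by (simp only: exp_add)
    also have "\<dots> \<le> exp ((2*u)^2/8)"
    proof -
      have "-u + ln (1 + (1/2) * (exp (2*u) - 1)) \<le> (2*u)^2/8" using L by simp
      then show ?thesis by (simp only: exp_le_cancel_iff)
    qed
    also have "(2*u)^2/8 = u^2/2" by (simp add: power2_eq_square)
    finally show ?thesis by simp
  qed
  show ?thesis
  proof (cases "t \<ge> 0")
    case True then show ?thesis using key by simp
  next
    case False then show ?thesis using key[of "-t"] by simp
  qed
qed

lemma finite_cube[simp]: "finite (cube N)"
  by (simp add: cube_def finite_PiE)

lemma card_cube: "card (cube N) = 2 ^ N"
  by (simp add: cube_def card_PiE numeral_2_eq_2)

lemma cube_ne: "cube N \<noteq> {}"
  using card_cube[of N] by auto

lemma cube_val: "x \<in> cube N \<Longrightarrow> n \<in> {1..N} \<Longrightarrow> x n = -1 \<or> x n = 1"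
  by (auto simp: cube_def PiE_iff)

lemma abs_walsh: "x \<in> cube N \<Longrightarrow> S \<subseteq> {1..N} \<Longrightarrow> \<bar>walsh S x\<bar> = 1"
  unfolding walsh_def abs_prod
  by (rule prod.neutral) (use cube_val in fastforce)

lemma walsh_sq: "x \<in> cube N \<Longrightarrow> S \<subseteq> {1..N} \<Longrightarrow> (walsh S x)^2 = 1"
  using abs_walsh by (metis abs_power2 one_power2 power2_abs abs_of_nonneg
      zero_le_one)

lemma walsh_expand:
  assumes "S \<subseteq> {1..N}"
  shows "walsh S x = (\<Prod>n\<in>{1..N}. if n \<in> S then x n else 1)"
proof -
  have "(\<Prod>n\<in>{1..N}. if n \<in> S then x n else 1) = prod x ({1..N} \<inter> {n. n \<in> S})"
    by (simp add: prod.If_cases)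
  also have "{1..N} \<inter> {n. n \<in> S} = S" using assms by auto
  finally show ?thesis by (simp add: walsh_def)
qed

lemma walsh_orth:
  assumes S: "S \<subseteq> {1..N}" and T: "T \<subseteq> {1..N}"
  shows "(\<Sum>x\<in>cube N. walsh S x * walsh T x) = (if S = T then 2 ^ N else 0)"
proof -
  define g where "g = (\<lambda>n (v::real). (if n \<in> S then v else 1) * (if n \<in> T then v else 1))"
  have "(\<Sum>x\<in>cube N. walsh S x * walsh T x) = (\<Sum>x\<in>cube N. \<Prod>n\<in>{1..N}. g n (x n))"
    by (simp add: walsh_expand[OF S] walsh_expand[OF T] g_def prod.distrib)
  also have "\<dots> = (\<Prod>n\<in>{1..N}. \<Sum>v\<in>{-1,1}. g n v)"
    unfolding cube_def by (rule prod_sum_PiE[of "{1..N}" "\<lambda>_. {-1,1}" g, symmetric]) auto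
  also have "\<dots> = (\<Prod>n\<in>{1..N}. if n \<in> S \<and> n \<in> T then 2 else if n \<in> S \<or> n \<in> T then 0 else 2)"
    by (rule prod.cong) (simp_all add: g_def)
  also have "\<dots> = (if S = T then 2 ^ N else 0)"
  proof (cases "S = T")
    case True
    have "(\<Prod>n\<in>{1..N}. if n \<in> S \<and> n \<in> T then 2 else if n \<in> S \<or> n \<in> T then 0 else (2::real)) = (\<Prod>n\<in>{1..N}. 2)"
      using True by (intro prod.cong) auto
    then show ?thesis using True by simp
  next
    case False
    then obtain n where "n \<in> {1..N}" "(n \<in> S) \<noteq> (n \<in> T)" using S T by blast
    then have "\<exists>n\<in>{1..N}. (if n \<in> S \<and> n \<in> T then 2 else if n \<in> S \<or> n \<in> T then 0 else (2::real)) = 0"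
      by auto
    then have "(\<Prod>n\<in>{1..N}. if n \<in> S \<and> n \<in> T then 2 else if n \<in> S \<or> n \<in> T then 0 else (2::real)) = 0"
      by (intro prod_zero[OF finite_atLeastAtMost])
    then show ?thesis using False by simp
  qed
  finally show ?thesis .
qed

lemma fourier_comb:
  assumes fin: "finite I" and I: "I \<subseteq> Pow {1..N}" and S: "S \<subseteq> {1..N}"
  shows "fourier N (\<lambda>x. \<Sum>T\<in>I. a T * walsh T x) S = (if S \<in> I then a S else 0)"
proof -
  have "(\<Sum>x\<in>cube N. (\<Sum>T\<in>I. a T * walsh T x) * walsh S x)
      = (\<Sum>T\<in>I. a T * (\<Sum>x\<in>cube N. walsh T x * walsh S x))"
    by (simp add: sum_distrib_left sum_distrib_right sum.swap[of _ "cube N"] mult.assoc)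
  also have "\<dots> = (\<Sum>T\<in>I. if T = S then a T * 2 ^ N else 0)"
  proof (rule sum.cong)
    fix T assume "T \<in> I"
    then have "T \<subseteq> {1..N}" using I by auto
    then show "a T * (\<Sum>x\<in>cube N. walsh T x * walsh S x) = (if T = S then a T * 2 ^ N else 0)"
      by (simp add: walsh_orth[OF _ S])
  qed simp
  also have "\<dots> = (if S \<in> I then a S * 2 ^ N else 0)"
    using fin by (simp add: sum.delta')
  finally show ?thesis by (simp add: fourier_def)
qed

lemma abs_le_supnorm: "x \<in> cube N \<Longrightarrow> \<bar>f x\<bar> \<le> supnorm N f"
  unfolding supnorm_def by (rule Max_ge) auto

lemma supnorm_le: "(\<And>x. x \<in> cube N \<Longrightarrow> \<bar>f x\<bar> \<le> B) \<Longrightarrow> supnorm N f \<le> B"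
  unfolding supnorm_def using cube_ne by (subst Max_le_iff) auto

lemma abs_fourier_le:
  assumes "S \<subseteq> {1..N}"
  shows "\<bar>fourier N f S\<bar> \<le> supnorm N f"
proof -
  have "\<bar>\<Sum>x\<in>cube N. f x * walsh S x\<bar> \<le> (\<Sum>x\<in>cube N. \<bar>f x * walsh S x\<bar>)"
    by (rule sum_abs)
  also have "\<dots> \<le> (\<Sum>x\<in>cube N. supnorm N f)"
    by (rule sum_mono) (simp add: abs_mult abs_walsh[OF _ assms] abs_le_supnorm)
  also have "\<dots> = 2 ^ N * supnorm N f" by (simp add: card_cube)
  finally show ?thesis by (simp add: fourier_def abs_divide field_simps)
qed



lemma exp_sum_signs:
  assumes fin: "finite I" and I: "I \<subseteq> Pow {1..N}" and x: "x \<in> cube N"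
  shows "(\<Sum>e\<in>PiE I (\<lambda>_. {-1,1::real}). exp (l * (\<Sum>S\<in>I. e S * c S * walsh S x)))
         \<le> 2 ^ card I * exp (l^2 * (\<Sum>S\<in>I. (c S)^2) / 2)"
proof -
  define g where "g = (\<lambda>S (v::real). exp (l * (v * c S * walsh S x)))"
  have "(\<Sum>e\<in>PiE I (\<lambda>_. {-1,1::real}). exp (l * (\<Sum>S\<in>I. e S * c S * walsh S x)))
      = (\<Sum>e\<in>PiE I (\<lambda>_. {-1,1::real}). \<Prod>S\<in>I. g S (e S))"
    by (rule sum.cong) (simp_all add: g_def sum_distrib_left exp_sum[OF fin])
  also have "\<dots> = (\<Prod>S\<in>I. \<Sum>v\<in>{-1,1}. g S v)"
    by (rule prod_sum_PiE[of I "\<lambda>_. {-1,1}" g, symmetric]) (simp_all add: fin)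
  also have "\<dots> \<le> (\<Prod>S\<in>I. 2 * exp (l^2 * (c S)^2 / 2))"
  proof (rule prod_mono)
    fix S assume "S \<in> I"
    then have "S \<subseteq> {1..N}" using I by auto
    then have w: "(walsh S x)^2 = 1" using walsh_sq[OF x] by simp
    have "(\<Sum>v\<in>{-1,1}. g S v) = exp (l * c S * walsh S x) + exp (- (l * c S * walsh S x))"
      by (simp add: g_def algebra_simps)
    also have "\<dots> \<le> 2 * exp ((l * c S * walsh S x)^2/2)" by (rule cosh_bound)
    also have "(l * c S * walsh S x)^2 = l^2 * (c S)^2" using w by (simp add: power_mult_distrib)
    finally show "0 \<le> (\<Sum>v\<in>{-1,1}. g S v) \<and> (\<Sum>v\<in>{-1,1}. g S v) \<le> 2 * exp (l^2 * (c S)^2 / 2)"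
      by (simp add: g_def add_nonneg_nonneg)
  qed
  also have "\<dots> = 2 ^ card I * exp (l^2 * (\<Sum>S\<in>I. (c S)^2) / 2)"
    by (simp add: prod.distrib exp_sum[OF fin, symmetric] sum_distrib_left sum_divide_distrib)
  finally show ?thesis .
qed

lemma exists_signs:
  assumes fin: "finite I" and I: "I \<subseteq> Pow {1..N}" and sig: "\<sigma> > 0" and sig2: "\<sigma>^2 = (\<Sum>S\<in>I. (c S)^2)"
  shows "\<exists>e\<in>PiE I (\<lambda>_. {-1,1::real}). \<forall>x\<in>cube N.
           \<bar>\<Sum>S\<in>I. e S * c S * walsh S x\<bar> \<le> \<sigma> * sqrt (2 * (real N + 1) * ln 2)"
proof -
  define E where "E = PiE I (\<lambda>_. {-1,1::real})"
  define h where "h = (\<lambda>e x. \<Sum>S\<in>I. e S * c S * walsh S x)"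
  define Lg where "Lg = (real N + 1) * ln 2"
  define t where "t = sqrt (2 * Lg)"
  have Lg: "Lg > 0" by (simp add: Lg_def)
  have t: "t > 0" "t^2 = 2 * Lg" using Lg by (simp_all add: t_def)
  define l where "l = t / \<sigma>"
  have l: "l > 0" using t sig by (simp add: l_def)
  define B where "B = 2 ^ (N+1) * exp (l^2 * \<sigma>^2 / 2)"
  define G where "G = (\<lambda>e. \<Sum>x\<in>cube N. exp (l * h e x) + exp (- l * h e x))"
  have finE: "finite E" and cardE: "card E = 2 ^ card I" and neE: "E \<noteq> {}"
    using fin by (auto simp: E_def card_PiE finite_PiE numeral_2_eq_2 PiE_eq_empty_iff)
  have "(\<Sum>e\<in>E. G e) = (\<Sum>x\<in>cube N. (\<Sum>e\<in>E. exp (l * h e x)) + (\<Sum>e\<in>E. exp ((- l) * h e x)))"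
    unfolding G_def by (simp add: sum.swap[of _ E] sum.distrib)
  also have "\<dots> \<le> (\<Sum>x\<in>cube N. 2 ^ card I * exp (l^2 * \<sigma>^2 / 2) + 2 ^ card I * exp ((-l)^2 * \<sigma>^2 / 2))"
    by (rule sum_mono, rule add_mono) 
       (unfold E_def h_def sig2, (rule exp_sum_signs[OF fin I]; assumption)+)
  also have "\<dots> = card E * B"
    by (simp add: card_cube cardE B_def power_add)
  finally have sumG: "(\<Sum>e\<in>E. G e) \<le> card E * B" .
  obtain e where e: "e \<in> E" "G e \<le> B"
  proof (rule ccontr)
    assume "\<not> thesis"
    then have "\<forall>e\<in>E. B < G e" using that by force
    then have "(\<Sum>e\<in>E. B) < (\<Sum>e\<in>E. G e)" using finE neE by (intro sum_strict_mono) auto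
    then show False using sumG by simp
  qed
  have "\<forall>x\<in>cube N. \<bar>h e x\<bar> \<le> \<sigma> * t"
  proof
    fix x assume x: "x \<in> cube N"
    have "exp (l * \<bar>h e x\<bar>) \<le> exp (l * h e x) + exp (- l * h e x)"
      by (cases "h e x \<ge> 0") (simp_all add: add_increasing add_increasing2)
    also have "\<dots> \<le> G e" unfolding G_def
      by (rule member_le_sum[OF x]) (simp_all add: add_nonneg_nonneg)
    also have "\<dots> \<le> B" by (rule e)
    finally have "l * \<bar>h e x\<bar> \<le> ln B"
      by (metis B_def exp_gt_zero exp_le_cancel_iff exp_ln mult_pos_pos zero_less_power zero_less_numeral)
    also have "ln B = Lg + l^2 * \<sigma>^2 / 2"
      by (simp add: B_def ln_mult Lg_def ln_realpow algebra_simps)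
    also have "l^2 * \<sigma>^2 / 2 = Lg" using sig t by (simp add: l_def power_divide)
    finally have "l * \<bar>h e x\<bar> \<le> 2 * Lg" by simp
    then have "l * \<bar>h e x\<bar> \<le> l * (\<sigma> * t)"
      using sig t by (simp add: l_def power2_eq_square)
    then show "\<bar>h e x\<bar> \<le> \<sigma> * t" using l by simp
  qed
  then show ?thesis using e unfolding E_def h_def t_def Lg_def mult.assoc by blast
qed



lemma mult_norm_ge:
  assumes p: "p > 0" and I: "I \<subseteq> Pow {1..N}" and fin: "finite I"
    and F: "F f" and sf: "supnorm N f \<le> 1"
  shows "lp_norm p I (\<lambda>S. \<xi> S * fourier N f S) \<le> mult_norm N F I p \<xi>"
  unfolding mult_norm_def
proof (rule cSup_upper)
  show "lp_norm p I (\<lambda>S. \<xi> S * fourier N f S) \<in> {lp_norm p I (\<lambda>S. \<xi> S * fourier N f S) |f. F f \<and> supnorm N f \<le> 1}"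
    using F sf by blast
  show "bdd_above {lp_norm p I (\<lambda>S. \<xi> S * fourier N f S) |f. F f \<and> supnorm N f \<le> 1}"
  proof (rule bdd_aboveI, safe)
    fix g assume "F g" "supnorm N g \<le> 1"
    have "(\<Sum>S\<in>I. \<bar>\<xi> S * fourier N g S\<bar> powr p) \<le> (\<Sum>S\<in>I. \<bar>\<xi> S\<bar> powr p)"
    proof (rule sum_mono)
      fix S assume "S \<in> I"
      then have "\<bar>fourier N g S\<bar> \<le> 1" using abs_fourier_le[of S N g] I \<open>supnorm N g \<le> 1\<close> by auto
      then have "\<bar>\<xi> S * fourier N g S\<bar> \<le> \<bar>\<xi> S\<bar>"
        by (simp add: abs_mult mult_left_le)
      then show "\<bar>\<xi> S * fourier N g S\<bar> powr p \<le> \<bar>\<xi> S\<bar> powr p"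
        using p by (intro powr_mono2) auto
    qed
    then show "lp_norm p I (\<lambda>S. \<xi> S * fourier N g S) \<le> (\<Sum>S\<in>I. \<bar>\<xi> S\<bar> powr p) powr (1/p)"
      unfolding lp_norm_def using p by (intro powr_mono2) (auto intro: sum_nonneg)
  qed
qed

lemma comb_supnorm_walsh:
  assumes fin: "finite I" and I: "I \<subseteq> Pow {1..N}" and T: "T \<in> I"
  shows "supnorm N (\<lambda>x. \<Sum>S\<in>I. (if S = T then 1 else 0) * walsh S x) \<le> 1"
proof (rule supnorm_le)
  fix x assume x: "x \<in> cube N"
  have "(\<Sum>S\<in>I. (if S = T then 1 else 0) * walsh S x) = walsh T x"
  proof -
    have "(\<Sum>S\<in>I. (if S = T then 1 else 0) * walsh S x) = (\<Sum>S\<in>I. if S = T then walsh S x else 0)"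
      by (rule sum.cong) auto
    then show ?thesis using fin T by simp
  qed
  also have "\<bar>\<dots>\<bar> = 1" using T I abs_walsh[OF x] by auto
  finally show "\<bar>\<Sum>S\<in>I. (if S = T then 1 else 0) * walsh S x\<bar> \<le> 1" by simp
qed

lemma coord_le:
  assumes p: "p > 0" and I: "I \<subseteq> Pow {1..N}" and fin: "finite I" and T: "T \<in> I"
    and hF: "\<And>a. F (\<lambda>x. \<Sum>S\<in>I. a S * walsh S x)"
  shows "\<bar>\<xi> T\<bar> \<le> mult_norm N F I p \<xi>"
proof -
  define f where "f = (\<lambda>x. \<Sum>S\<in>I. (if S = T then 1 else 0) * walsh S x)"
  have "lp_norm p I (\<lambda>S. \<xi> S * fourier N f S) \<le> mult_norm N F I p \<xi>"
    using mult_norm_ge[OF p I fin, of F f] hF comb_supnorm_walsh[OF fin I T] by (simp add: f_def)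
  moreover have "lp_norm p I (\<lambda>S. \<xi> S * fourier N f S) = \<bar>\<xi> T\<bar>"
  proof -
    have "(\<Sum>S\<in>I. \<bar>\<xi> S * fourier N f S\<bar> powr p) = (\<Sum>S\<in>I. if S = T then \<bar>\<xi> T\<bar> powr p else 0)"
    proof (rule sum.cong)
      fix S assume "S \<in> I"
      then have "fourier N f S = (if S = T then 1 else 0)"
      proof -
        have "S \<subseteq> {1..N}" using \<open>S \<in> I\<close> I by auto
        then show ?thesis unfolding f_def using fourier_comb[OF fin I, of S "\<lambda>S. if S = T then 1 else 0"] \<open>S \<in> I\<close> by simp
      qed
      then show "\<bar>\<xi> S * fourier N f S\<bar> powr p = (if S = T then \<bar>\<xi> T\<bar> powr p else 0)" by simp
    qed simp
    also have "\<dots> = \<bar>\<xi> T\<bar> powr p" using fin T by simp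
    finally show ?thesis unfolding lp_norm_def using p by (simp add: powr_powr)
  qed
  ultimately show ?thesis by simp
qed

lemma mult_norm_nonneg:
  assumes p: "p > 0" and I: "I \<subseteq> Pow {1..N}" and fin: "finite I"
    and hF: "\<And>a. F (\<lambda>x. \<Sum>S\<in>I. a S * walsh S x)"
  shows "0 \<le> mult_norm N F I p \<xi>"
proof -
  have "F (\<lambda>x. \<Sum>S\<in>I. 0 * walsh S x)" by (rule hF)
  moreover have "supnorm N (\<lambda>x. \<Sum>S\<in>I. 0 * walsh S x) \<le> 1" by (rule supnorm_le) simp
  ultimately have "lp_norm p I (\<lambda>S. \<xi> S * fourier N (\<lambda>x. \<Sum>S\<in>I. 0 * walsh S x) S) \<le> mult_norm N F I p \<xi>"
    by (rule mult_norm_ge[OF p I fin])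
  moreover have "0 \<le> lp_norm p I (\<lambda>S. \<xi> S * fourier N (\<lambda>x. \<Sum>S\<in>I. 0 * walsh S x) S)"
    by (simp add: lp_norm_def)
  ultimately show ?thesis by linarith
qed



lemma powr_sq: "(z::real) \<ge> 0 \<Longrightarrow> (z powr a)^2 = z powr (2*a)"
proof -
  have "(z powr a)^2 = z powr a * z powr a" by (simp add: power2_eq_square)
  also have "\<dots> = z powr (a + a)" by (simp only: powr_add)
  also have "a + a = 2 * a" by simp
  finally show ?thesis .
qed

lemma main_lr:
  assumes p1: "1 \<le> p" and p2: "p < 2" and fin: "finite I" and I: "I \<subseteq> Pow {1..N}"
    and hF: "\<And>a. F (\<lambda>x. \<Sum>S\<in>I. a S * walsh S x)"
  shows "lr_norm p I \<xi> \<le> sqrt (2 * (real N + 1) * ln 2) * mult_norm N F I p \<xi>"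
proof -
  define q where "q = 1 / p - 1 / 2"
  have p0: "p > 0" using p1 by simp
  have q: "q > 0" using p2 p0 by (simp add: q_def field_simps)
  define r where "r = 1 / q"
  have r: "r > 0" using q by (simp add: r_def)
  have rq: "1 / r = q" by (simp add: r_def)
  have key: "p + r / 2 * p = r"
    using q p0 unfolding r_def q_def by (simp add: field_simps)
  have key2: "p + r * p / 2 = r" using key by simp
  define A where "A = (\<Sum>S\<in>I. \<bar>\<xi> S\<bar> powr r)"
  have A0: "A \<ge> 0" by (simp add: A_def sum_nonneg)
  have lr: "lr_norm p I \<xi> = A powr q"
    using p2 unfolding lr_norm_def lp_norm_def A_def r_def q_def by simp
  define t where "t = sqrt (2 * (real N + 1) * ln 2)"
  have t: "t > 0" by (simp add: t_def)
  have M0: "0 \<le> mult_norm N F I p \<xi>" by (rule mult_norm_nonneg[OF p0 I fin]) (rule hF)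
  show ?thesis
  proof (cases "A = 0")
    case True
    then show ?thesis using lr M0 t by (simp add: t_def[symmetric])
  next
    case False
    then have Apos: "A > 0" using A0 by simp
    define c where "c = (\<lambda>S. \<bar>\<xi> S\<bar> powr (r/2))"
    define \<sigma> where "\<sigma> = sqrt A"
    have sig: "\<sigma> > 0" using Apos by (simp add: \<sigma>_def)
    have sig2: "\<sigma>^2 = (\<Sum>S\<in>I. (c S)^2)"
      using A0 by (simp add: \<sigma>_def A_def c_def powr_sq)
    obtain e where e: "e \<in> PiE I (\<lambda>_. {-1,1::real})"
      and eb: "\<forall>x\<in>cube N. \<bar>\<Sum>S\<in>I. e S * c S * walsh S x\<bar> \<le> \<sigma> * t"
      using exists_signs[OF fin I sig sig2] unfolding t_def by blast
    define a where "a = (\<lambda>S. e S * c S / (t * \<sigma>))"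
    define f where "f = (\<lambda>x. \<Sum>S\<in>I. a S * walsh S x)"
    have sf: "supnorm N f \<le> 1"
    proof (rule supnorm_le)
      fix x assume x: "x \<in> cube N"
      have "f x = (\<Sum>S\<in>I. e S * c S * walsh S x) / (t * \<sigma>)"
        by (simp add: f_def a_def sum_divide_distrib)
      then show "\<bar>f x\<bar> \<le> 1" using eb x t sig by (simp add: abs_divide mult.commute)
    qed
    have ge: "lp_norm p I (\<lambda>S. \<xi> S * fourier N f S) \<le> mult_norm N F I p \<xi>"
      using mult_norm_ge[OF p0 I fin _ sf, of F] hF[of a] by (simp add: f_def)
    have "(\<Sum>S\<in>I. \<bar>\<xi> S * fourier N f S\<bar> powr p) = (\<Sum>S\<in>I. \<bar>\<xi> S\<bar> powr r / (t * \<sigma>) powr p)"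
    proof (rule sum.cong)
      fix S assume S: "S \<in> I"
      then have "S \<subseteq> {1..N}" using I by auto
      then have fS: "fourier N f S = a S" unfolding f_def using fourier_comb[OF fin I] S by simp
      have eS: "\<bar>e S\<bar> = 1" using e S by (auto simp: PiE_iff)
      have "\<bar>\<xi> S * fourier N f S\<bar> = \<bar>\<xi> S\<bar> * c S / (t * \<sigma>)"
        using fS eS t sig by (simp add: a_def abs_mult abs_divide c_def)
      then have "\<bar>\<xi> S * fourier N f S\<bar> powr p = (\<bar>\<xi> S\<bar> powr p * c S powr p) / (t * \<sigma>) powr p"
        using t sig by (simp add: powr_divide powr_mult c_def)
      also have "\<bar>\<xi> S\<bar> powr p * c S powr p = \<bar>\<xi> S\<bar> powr r"
        by (simp add: c_def powr_powr key2 flip: powr_add)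
      finally show "\<bar>\<xi> S * fourier N f S\<bar> powr p = \<bar>\<xi> S\<bar> powr r / (t * \<sigma>) powr p" .
    qed simp
    also have "\<dots> = A / (t * \<sigma>) powr p" by (simp add: A_def sum_divide_distrib)
    finally have "lp_norm p I (\<lambda>S. \<xi> S * fourier N f S) = (A / (t * \<sigma>) powr p) powr (1/p)"
      by (simp add: lp_norm_def)
    also have "\<dots> = A powr (1/p) / (t * \<sigma>)"
      using A0 t sig p0 by (simp add: powr_divide powr_powr)
    also have "\<sigma> = A powr (1/2)" using A0 by (simp add: \<sigma>_def powr_half_sqrt)
    also have "A powr (1/p) / (t * A powr (1/2)) = A powr q / t"
      using Apos by (simp add: q_def powr_diff)
    finally have "A powr q \<le> t * mult_norm N F I p \<xi>"
      using ge t by (simp add: field_simps) (metis mult_left_mono less_imp_le)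
    then show ?thesis using lr by (simp add: t_def)
  qed
qed



lemma big_ge: "2 \<le> 2 * sqrt 2 * exp (2::real)"
proof -
  have "1 \<le> sqrt (2::real)" by simp
  moreover have "1 \<le> exp (2::real)" by simp
  ultimately have "1 \<le> sqrt 2 * exp (2::real)" using mult_mono[of 1 "sqrt 2" 1 "exp 2"] by simp
  then show ?thesis by simp
qed

lemma final_B:
  assumes "1 \<le> Q" "1/2 \<le> k" "lr \<le> M" "0 \<le> M"
  shows "lr / Q \<le> 2 * sqrt 2 * exp 2 * k * M"
proof -
  have "1 \<le> 2 * sqrt 2 * exp 2 * k"
    using big_ge assms(2) mult_mono[of 2 "2 * sqrt 2 * exp (2::real)" "1/2" k] by simp
  then have "M \<le> 2 * sqrt 2 * exp 2 * k * M" using assms(4) mult_right_mono[of 1 _ M] by simp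
  moreover have "lr / Q \<le> M"
  proof (cases "lr \<ge> 0")
    case True
    then have "lr / Q \<le> lr" using assms(1) by (simp add: divide_le_eq mult_le_cancel_left1 mult_left_mono)
    then show ?thesis using assms(3) by simp
  next
    case False
    then have "lr / Q \<le> 0" using assms(1) by (simp add: divide_nonpos_pos)
    then show ?thesis using assms(4) by simp
  qed
  ultimately show ?thesis by simp
qed

lemma final_A:
  assumes M: "0 \<le> M" and L: "ln 2 \<le> L" and k: "1 \<le> k"
    and lr: "lr \<le> sqrt (2 * (real N + 1) * ln 2) * M"
  shows "lr / sqrt (1 + real N * L) \<le> 2 * sqrt 2 * exp 2 * k * M"
proof -
  have l2: "0 < ln (2::real)" "ln (2::real) < 1" using ln_2_less_1 by simp_all
  define Q where "Q = sqrt (1 + real N * L)"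
  have L0: "0 \<le> L" using L l2(1) by linarith
  have Q1: "1 \<le> Q" using L0 by (simp add: Q_def)
  have "2 * (real N + 1) * ln 2 \<le> 2 * (1 + real N * L)"
    using l2 L mult_left_mono[OF L, of "real N"] by (simp add: algebra_simps)
  then have "sqrt (2 * (real N + 1) * ln 2) \<le> sqrt (2 * (1 + real N * L))" by simp
  also have "\<dots> = sqrt 2 * Q" unfolding Q_def by (rule real_sqrt_mult)
  finally have "lr \<le> sqrt 2 * Q * M" using lr M by (meson order_trans mult_right_mono)
  then have "lr / Q \<le> sqrt 2 * M" using Q1 by (simp add: divide_le_eq mult.commute mult.left_commute)
  also have "\<dots> \<le> 2 * sqrt 2 * exp 2 * k * M"
  proof -
    have e1: "1 \<le> exp (2::real)" by simp
    then have e2: "1 \<le> 2 * exp (2::real)" by linarith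
    have "1 \<le> 2 * exp 2 * k"
      using k e2 mult_mono[of 1 "2 * exp (2::real)" 1 k] by simp
    then have "sqrt 2 * 1 \<le> sqrt 2 * (2 * exp 2 * k)" by simp
    then have "(sqrt 2 * 1) * M \<le> (sqrt 2 * (2 * exp 2 * k)) * M" using M by (rule mult_right_mono)
    then show ?thesis by (simp add: algebra_simps)
  qed
  finally show ?thesis by (simp add: Q_def)
qed

lemma part:
  assumes p1: "1 \<le> p" and p2: "p \<le> 2" and fin: "finite I" and I: "I \<subseteq> Pow {1..N}" and ne: "I \<noteq> {}"
    and hF: "\<And>a. F (\<lambda>x. \<Sum>S\<in>I. a S * walsh S x)" and L: "ln 2 \<le> L" and k: "1 \<le> k"
  shows "lr_norm p I \<xi> / sqrt (1 + real N * L) \<le> 2 * sqrt 2 * exp 2 * k * mult_norm N F I p \<xi>"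
proof -
  have p0: "p > 0" using p1 by simp
  have M0: "0 \<le> mult_norm N F I p \<xi>" by (rule mult_norm_nonneg[OF p0 I fin]) (rule hF)
  show ?thesis
  proof (cases "p = 2")
    case True
    have "lr_norm p I \<xi> = Max ((\<lambda>S. \<bar>\<xi> S\<bar>) ` I)" using True by (simp add: lr_norm_def)
    also have "\<dots> \<le> mult_norm N F I p \<xi>"
      using fin ne coord_le[OF p0 I fin, of _ F \<xi>] hF by (subst Max_le_iff) auto
    finally have "lr_norm p I \<xi> \<le> mult_norm N F I p \<xi>" .
    moreover have "1 \<le> sqrt (1 + real N * L)"
    proof -
      have "0 < ln (2::real)" by simp
      then have "0 \<le> L" using L by linarith
      then show ?thesis by simp
    qed
    ultimately show ?thesis using final_B M0 k by simp
  next
    case False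
    then have "p < 2" using p2 by simp
    have "lr_norm p I \<xi> \<le> sqrt (2 * (real N + 1) * ln 2) * mult_norm N F I p \<xi>"
      by (rule main_lr[OF p1 \<open>p < 2\<close> fin I]) (rule hF)
    then show ?thesis by (rule final_A[OF M0 L k])
  qed
qed

lemma single:
  assumes p1: "1 \<le> p" and p2: "p \<le> 2" and hF: "\<And>a. F (\<lambda>x. \<Sum>S\<in>{{}}. a S * walsh S x)" and k: "1/2 \<le> k"
  shows "lr_norm p {{}} \<xi> / sqrt (1 + real N * ln (1 + 20 * real 0)) \<le> 2 * sqrt 2 * exp 2 * k * mult_norm N F {{}} p \<xi>"
proof -
  have p0: "p > 0" using p1 by simp
  have I: "{{}} \<subseteq> Pow {1..N}" by simp
  have M0: "0 \<le> mult_norm N F {{}} p \<xi>" by (rule mult_norm_nonneg[OF p0 I]) (simp, rule hF)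
  have c: "\<bar>\<xi> {}\<bar> \<le> mult_norm N F {{}} p \<xi>" by (rule coord_le[OF p0 I]) (simp, simp, rule hF)
  have "lr_norm p {{}} \<xi> = \<bar>\<xi> {}\<bar>"
  proof (cases "p = 2")
    case True then show ?thesis by (simp add: lr_norm_def)
  next
    case False
    then have "1 / p - 1 / 2 > 0" using p1 p2 by (simp add: field_simps)
    then show ?thesis using False by (simp add: lr_norm_def lp_norm_def powr_powr)
  qed
  then show ?thesis using final_B[OF _ k _ M0, of 1] c by simp
qed



lemma finI: "finite {S. S \<subseteq> {1..(N::nat)} \<and> P S}"
  by (rule finite_subset[of _ "Pow {1..N}"]) auto

lemma hF_deg: "deg_le N d (\<lambda>x. \<Sum>S\<in>{S. S \<subseteq> {1..N} \<and> card S \<le> d}. a S * walsh S x)"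
  unfolding deg_le_def
proof (intro allI impI)
  fix S assume S: "S \<subseteq> {1..N} \<and> d < card S"
  then show "fourier N (\<lambda>x. \<Sum>S\<in>{S. S \<subseteq> {1..N} \<and> card S \<le> d}. a S * walsh S x) S = 0"
  proof -
    have "fourier N (\<lambda>x. \<Sum>S\<in>{S. S \<subseteq> {1..N} \<and> card S \<le> d}. a S * walsh S x) S = (if S \<in> {S. S \<subseteq> {1..N} \<and> card S \<le> d} then a S else 0)"
      by (rule fourier_comb[OF finI]) (use S in auto)
    then show ?thesis using S by auto
  qed
qed

lemma hF_hom: "homog N d (\<lambda>x. \<Sum>S\<in>{S. S \<subseteq> {1..N} \<and> card S = d}. a S * walsh S x)"
  unfolding homog_def
proof (intro allI impI)
  fix S assume S: "S \<subseteq> {1..N} \<and> card S \<noteq> d"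
  then show "fourier N (\<lambda>x. \<Sum>S\<in>{S. S \<subseteq> {1..N} \<and> card S = d}. a S * walsh S x) S = 0"
  proof -
    have "fourier N (\<lambda>x. \<Sum>S\<in>{S. S \<subseteq> {1..N} \<and> card S = d}. a S * walsh S x) S = (if S \<in> {S. S \<subseteq> {1..N} \<and> card S = d} then a S else 0)"
      by (rule fourier_comb[OF finI]) (use S in auto)
    then show ?thesis using S by auto
  qed
qed

lemma card0: "S \<subseteq> {1..(N::nat)} \<Longrightarrow> card S = 0 \<Longrightarrow> S = {}"
  by (metis card_0_eq finite_atLeastAtMost finite_subset)

lemma zero_sets: "{S. S \<subseteq> {1..(N::nat)} \<and> card S \<le> 0} = {{}}" "{S. S \<subseteq> {1..N} \<and> card S = 0} = {{}}"
  using card0 by auto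

theorem theorem6p7:
  fixes p :: real and d N :: nat
  assumes "1 \<le> p" and "p \<le> 2" and "d \<le> N"
  shows
    "(\<forall>\<xi> :: nat set \<Rightarrow> real.
       lr_norm p (Pow {1..N}) \<xi> / sqrt (1 + real N * ln 2)
       \<le> 2 * sqrt 2 * exp 2 * mult_norm N (\<lambda>f. True) (Pow {1..N}) p \<xi>)
   \<and> (\<forall>\<xi> :: nat set \<Rightarrow> real.
       lr_norm p {S. S \<subseteq> {1..N} \<and> card S \<le> d} \<xi> / sqrt (1 + real N * ln (1 + 20 * real d))
       \<le> 2 * sqrt 2 * exp 2 * (1 + sqrt 2) ^ d
          * mult_norm N (deg_le N d) {S. S \<subseteq> {1..N} \<and> card S \<le> d} p \<xi>)
   \<and> (\<forall>\<xi> :: nat set \<Rightarrow> real.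
       lr_norm p {S. S \<subseteq> {1..N} \<and> card S = d} \<xi> / sqrt (1 + real N * ln (1 + 20 * real d))
       \<le> 2 * sqrt 2 * exp 2 * 2 powr (real d - 1)
          * mult_norm N (homog N d) {S. S \<subseteq> {1..N} \<and> card S = d} p \<xi>)"
proof (intro conjI allI)
  fix \<xi> :: "nat set \<Rightarrow> real"
  have "lr_norm p (Pow {1..N}) \<xi> / sqrt (1 + real N * ln 2)
       \<le> 2 * sqrt 2 * exp 2 * 1 * mult_norm N (\<lambda>f. True) (Pow {1..N}) p \<xi>"
    by (rule part) (use assms in auto)
  then show "lr_norm p (Pow {1..N}) \<xi> / sqrt (1 + real N * ln 2)
       \<le> 2 * sqrt 2 * exp 2 * mult_norm N (\<lambda>f. True) (Pow {1..N}) p \<xi>" by simp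
next
  fix \<xi> :: "nat set \<Rightarrow> real"
  show "lr_norm p {S. S \<subseteq> {1..N} \<and> card S \<le> d} \<xi> / sqrt (1 + real N * ln (1 + 20 * real d))
       \<le> 2 * sqrt 2 * exp 2 * (1 + sqrt 2) ^ d
          * mult_norm N (deg_le N d) {S. S \<subseteq> {1..N} \<and> card S \<le> d} p \<xi>"
  proof (cases "d = 0")
    case True
    have hF: "\<And>a. deg_le N 0 (\<lambda>x. \<Sum>S\<in>{{}}. a S * walsh S x)"
      using hF_deg[of N 0] by (simp only: zero_sets)
    have "lr_norm p {{}} \<xi> / sqrt (1 + real N * ln (1 + 20 * real 0)) \<le> 2 * sqrt 2 * exp 2 * 1 * mult_norm N (deg_le N 0) {{}} p \<xi>"
      by (rule single) (use assms hF in auto)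
    moreover have I: "{S. S \<subseteq> {1..N} \<and> card S \<le> d} = {{}}" using True zero_sets by simp
    ultimately show ?thesis unfolding I True by simp
  next
    case False
    have "ln 2 \<le> ln (1 + 20 * real d)" using False by simp
    moreover have "1 \<le> (1 + sqrt 2) ^ d" by simp
    ultimately show ?thesis
      by (intro part) (use assms hF_deg finI in auto)
  qed
next
  fix \<xi> :: "nat set \<Rightarrow> real"
  show "lr_norm p {S. S \<subseteq> {1..N} \<and> card S = d} \<xi> / sqrt (1 + real N * ln (1 + 20 * real d))
       \<le> 2 * sqrt 2 * exp 2 * 2 powr (real d - 1)
          * mult_norm N (homog N d) {S. S \<subseteq> {1..N} \<and> card S = d} p \<xi>"
  proof (cases "d = 0")
    case True
    have hF: "\<And>a. homog N 0 (\<lambda>x. \<Sum>S\<in>{{}}. a S * walsh S x)"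
      using hF_hom[of N 0] by (simp only: zero_sets)
    have "lr_norm p {{}} \<xi> / sqrt (1 + real N * ln (1 + 20 * real 0)) \<le> 2 * sqrt 2 * exp 2 * 2 powr (real 0 - 1) * mult_norm N (homog N 0) {{}} p \<xi>"
      by (rule single) (use assms hF in auto)
    moreover have I: "{S. S \<subseteq> {1..N} \<and> card S = d} = {{}}" using True zero_sets by simp
    ultimately show ?thesis unfolding I True by simp
  next
    case False
    have "ln 2 \<le> ln (1 + 20 * real d)" using False by simp
    moreover have "1 \<le> 2 powr (real d - 1)" using False by (intro ge_one_powr_ge_zero) auto
    moreover have mem: "{1..d} \<in> {S. S \<subseteq> {1..N} \<and> card S = d}" using assms by auto
    then have ne: "{S. S \<subseteq> {1..N} \<and> card S = d} \<noteq> {}" by blast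
    ultimately show ?thesis
      by (intro part) (use assms hF_hom finI ne in auto)
  qed
qed


end
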